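(* Let $f_{AH}(x)=\frac{x+1}{2}-\frac{2x}{x+1}$ for $x\in(0,\infty)$, let $f_{AH}^*(u)=u\,f_{AH}\!\left(\frac{1-u}{u}\right)$ for $u\in(0,1)$, extended by continuity to $[0,1]$ (explicitly $f_{AH}^*(u)=\frac12(2u-1)^2$), and define $\overline M_{AH}(C_1,C_2)=E_X\{f_{AH}^*(P(C_2\mid x))\}$. Then $$P_e\le \frac12\left[1-2\,\overline M_{AH}(C_1,C_2)\right].$$
   Context: Two-class decision problem: classes $C_1,C_2$, an observation $x$ in a space $\mathrm X$ with density $p(x)$, and a posteriori probabilities $P(C_1\mid x),P(C_2\mid x)\ge0$ with $P(C_1\mid x)+P(C_2\mid x)=1$. $E_X\{g(x)\}=\int_{\mathrm X} g(x)p(x)\,dx$. $P_e=E_X\{\min(P(C_1\mid x),P(C_2\mid x))\}$ is the Bayesian probability of error. *)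

theory Defs
  imports "HOL-Analysis.Analysis"
begin

definition fAH :: "real \<Rightarrow> real" where
  "fAH x = (x + 1) / 2 - 2 * x / (x + 1)"

text \<open>Perspective transform on (0,1), extended by continuity to the endpoints
  (the limits at 0 and 1 are both 1/2).\<close>
definition fAH_star :: "real \<Rightarrow> real" where
  "fAH_star u = (if u = 0 \<or> u = 1 then 1 / 2 else u * fAH ((1 - u) / u))"

definition E_X :: "('a::euclidean_space \<Rightarrow> real) \<Rightarrow> ('a \<Rightarrow> real) \<Rightarrow> real" where
  "E_X p g = (\<integral>x. g x * p x \<partial>lborel)"

definition Pe :: "('a::euclidean_space \<Rightarrow> real) \<Rightarrow> ('a \<Rightarrow> real) \<Rightarrow> ('a \<Rightarrow> real) \<Rightarrow> real" where
  "Pe p P1 P2 = E_X p (\<lambda>x. min (P1 x) (P2 x))"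

definition M_AH :: "('a::euclidean_space \<Rightarrow> real) \<Rightarrow> ('a \<Rightarrow> real) \<Rightarrow> real" where
  "M_AH p P2 = E_X p (\<lambda>x. fAH_star (P2 x))"

end

theory Submission
  imports Defs
begin

lemma fAH_star_eq: "0 \<le> u \<Longrightarrow> u \<le> 1 \<Longrightarrow> fAH_star u = (2*u-1)^2/2"
  unfolding fAH_star_def fAH_def
  apply (cases "u = 0 \<or> u = 1")
   apply (auto simp: power2_eq_square)
  apply (simp add: field_simps)
  done

lemma bnd_int:
  fixes p :: "'a::euclidean_space \<Rightarrow> real"
  assumes "integrable lborel p" "h \<in> borel_measurable lborel" "p \<in> borel_measurable lborel"
    "\<And>x. \<bar>h x\<bar> \<le> 1" "\<And>x. p x \<ge> 0"
  shows "integrable lborel (\<lambda>x. h x * p x)"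
proof (rule Bochner_Integration.integrable_bound[OF assms(1)])
  show "(\<lambda>x. h x * p x) \<in> borel_measurable lborel" using assms by measurable
  show "AE x in lborel. norm (h x * p x) \<le> norm (p x)"
  proof (rule AE_I2)
    fix x
    have "\<bar>h x\<bar> * \<bar>p x\<bar> \<le> 1 * \<bar>p x\<bar>" by (rule mult_right_mono[OF assms(4)]) simp
    then show "norm (h x * p x) \<le> norm (p x)" by (simp add: abs_mult)
  qed
qed

theorem mainTheorem9:
  fixes p :: "'a::euclidean_space \<Rightarrow> real"
    and P1 P2 :: "'a \<Rightarrow> real"
  assumes p_meas: "p \<in> borel_measurable lborel"
    and p_nonneg: "\<And>x. p x \<ge> 0"
    and p_int: "integrable lborel p"
    and p_total: "(\<integral>x. p x \<partial>lborel) = 1"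
    and P1_meas: "P1 \<in> borel_measurable lborel"
    and P2_meas: "P2 \<in> borel_measurable lborel"
    and P1_nonneg: "\<And>x. P1 x \<ge> 0"
    and P2_nonneg: "\<And>x. P2 x \<ge> 0"
    and P_sum: "\<And>x. P1 x + P2 x = 1"
  shows "Pe p P1 P2 \<le> 1 / 2 * (1 - 2 * M_AH p P2)"
proof -
  have P2le: "P2 x \<le> 1" for x using P_sum[of x] P1_nonneg[of x] by linarith
  define g where "g x = (2 * P2 x - 1)^2 / 2" for x
  have fs: "fAH_star (P2 x) = g x" for x
    using fAH_star_eq[OF P2_nonneg P2le] unfolding g_def by simp
  have gm: "g \<in> borel_measurable lborel" unfolding g_def using P2_meas by measurable
  have gb: "\<bar>g x\<bar> \<le> 1" for x
  proof -
    have "\<bar>2 * P2 x - 1\<bar> \<le> 1" using P2_nonneg[of x] P2le[of x] by linarith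
    hence "(2 * P2 x - 1)^2 \<le> 1" by (metis abs_le_square_iff abs_one one_power2)
    thus ?thesis unfolding g_def by simp
  qed
  have mm: "(\<lambda>x. min (P1 x) (P2 x)) \<in> borel_measurable lborel" using P1_meas P2_meas by measurable
  have mb: "\<bar>min (P1 x) (P2 x)\<bar> \<le> 1" for x using P1_nonneg[of x] P2_nonneg[of x] P_sum[of x] by (auto simp: min_def)
  have i1: "integrable lborel (\<lambda>x. min (P1 x) (P2 x) * p x)"
    by (rule bnd_int[OF p_int mm p_meas mb p_nonneg])
  have i2: "integrable lborel (\<lambda>x. g x * p x)"
    by (rule bnd_int[OF p_int gm p_meas gb p_nonneg])
  have pw: "min (P1 x) (P2 x) * p x \<le> p x / 2 - g x * p x" for x
  proof -
    have "min (P1 x) (P2 x) \<le> 1/2 - g x"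
    proof -
      define u where "u = P2 x"
      have u0: "0 \<le> u" "u \<le> 1" using P2_nonneg[of x] P2le[of x] u_def by auto
      have e: "1/2 - g x = 2 * u * (1 - u)" unfolding g_def u_def by (simp add: power2_eq_square field_simps)
      have p1: "P1 x = 1 - u" using P_sum[of x] u_def by simp
      show ?thesis
      proof (cases "u \<le> 1/2")
        case True
        have "0 \<le> u * (1 - 2*u)" using True u0 by simp
        thus ?thesis unfolding e p1 u_def[symmetric] using True by (simp add: min_def algebra_simps)
      next
        case False
        have "0 \<le> (1 - u) * (2*u - 1)" using False u0 by simp
        thus ?thesis unfolding e p1 u_def[symmetric] using False by (simp add: min_def algebra_simps)
      qed
    qed
    hence "min (P1 x) (P2 x) * p x \<le> (1/2 - g x) * p x" using p_nonneg[of x] by (rule mult_right_mono)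
    thus ?thesis by (simp add: algebra_simps)
  qed
  have "Pe p P1 P2 = (\<integral>x. min (P1 x) (P2 x) * p x \<partial>lborel)" unfolding Pe_def E_X_def by simp
  also have "\<dots> \<le> (\<integral>x. p x / 2 - g x * p x \<partial>lborel)"
    by (rule integral_mono[OF i1 _ pw]) (intro Bochner_Integration.integrable_diff integrable_divide p_int i2)
  also have "\<dots> = (\<integral>x. p x \<partial>lborel) / 2 - (\<integral>x. g x * p x \<partial>lborel)"
    using p_int i2 by simp
  also have "(\<integral>x. g x * p x \<partial>lborel) = M_AH p P2" unfolding M_AH_def E_X_def fs ..
  finally show ?thesis using p_total by simp
qed

end
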